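(* The clone $\mathscr{C}_{I_{\bar d=0}}$ is precomplete, i.e., it is a coatom of the lattice of all clones on $\mathbb{N}$: $\mathscr{C}_{I_{\bar d=0}}\ne\mathscr{O}$, and the only clone properly containing $\mathscr{C}_{I_{\bar d=0}}$ is $\mathscr{O}$.
   Context: $\mathbb{N}=\{0,1,2,\dots\}$, $\mathscr{O}$ is the set of all finitary functions $\mathbb{N}^k\to\mathbb{N}$, $k\ge1$. A clone is a subset of $\mathscr{O}$ containing all projections and closed under composition. For $A\subseteq\mathbb{N}$, $\bar d(A)=\limsup_{n\to\infty}\frac{|A\cap[0,n)|}{n}$. $\mathscr{C}_{I_{\bar d=0}}$ is the set of all $k$-ary $f\in\mathscr{O}$ such that $\bar d(f[A^k])=0$ for every $A\subseteq\mathbb{N}$ with $\bar d(A)=0$. *)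

theory Defs
  imports Complex_Main "HOL-Library.Liminf_Limsup" "HOL-Library.Extended_Real"
begin

text \<open>A finitary operation on the naturals is represented as a pair (k, f) with
  arity k \<ge> 1 and f acting on argument lists; to make the representation
  canonical, f is required to return 0 on lists whose length is not k.\<close>

type_synonym op = "nat \<times> (nat list \<Rightarrow> nat)"

definition all_ops :: "op set" where
  "all_ops = {(k, f). k \<ge> 1 \<and> (\<forall>xs. length xs \<noteq> k \<longrightarrow> f xs = 0)}"

definition proj :: "nat \<Rightarrow> nat \<Rightarrow> op" where
  "proj k i = (k, \<lambda>xs. if length xs = k then xs ! i else 0)"

definition compose :: "op \<Rightarrow> op list \<Rightarrow> nat \<Rightarrow> op" where
  "compose F Gs k = (k, \<lambda>xs. if length xs = k then snd F (map (\<lambda>G. snd G xs) Gs) else 0)"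

definition is_clone :: "op set \<Rightarrow> bool" where
  "is_clone C \<longleftrightarrow> C \<subseteq> all_ops
     \<and> (\<forall>k i. 1 \<le> k \<and> i < k \<longrightarrow> proj k i \<in> C)
     \<and> (\<forall>F Gs k. F \<in> C \<and> length Gs = fst F \<and> k \<ge> 1 \<and> (\<forall>G\<in>set Gs. G \<in> C \<and> fst G = k)
           \<longrightarrow> compose F Gs k \<in> C)"

definition upper_density :: "nat set \<Rightarrow> ereal" where
  "upper_density A = limsup (\<lambda>n. ereal (real (card (A \<inter> {..<n})) / real n))"

definition image_pow :: "op \<Rightarrow> nat set \<Rightarrow> nat set" where
  "image_pow F A = snd F ` {xs. length xs = fst F \<and> set xs \<subseteq> A}"

definition C_d0 :: "op set" where
  "C_d0 = {F \<in> all_ops. \<forall>A. upper_density A = 0 \<longrightarrow> upper_density (image_pow F A) = 0}"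

definition precomplete :: "op set \<Rightarrow> bool" where
  "precomplete C \<longleftrightarrow> is_clone C \<and> C \<noteq> all_ops
     \<and> (\<forall>D. is_clone D \<and> C \<subset> D \<longrightarrow> D = all_ops)"

end

theory Submission imports Defs begin

definition thin :: "nat set \<Rightarrow> bool" where
  "thin A \<longleftrightarrow> (\<lambda>n. real (card (A \<inter> {..<n})) / real n) \<longlonglongrightarrow> 0"

lemma ud_thin: "upper_density A = 0 \<longleftrightarrow> thin A"
proof
  let ?f = "\<lambda>n. real (card (A \<inter> {..<n})) / real n"
  assume "thin A"
  then have "(\<lambda>n. ereal (?f n)) \<longlonglongrightarrow> ereal 0" unfolding thin_def by simp
  then have "limsup (\<lambda>n. ereal (?f n)) = ereal 0" by (intro lim_imp_Limsup) simp_all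
  then show "upper_density A = 0" unfolding upper_density_def by (simp add: zero_ereal_def)
next
  let ?f = "\<lambda>n. real (card (A \<inter> {..<n})) / real n"
  assume h: "upper_density A = 0"
  have "0 \<le> liminf (\<lambda>n. ereal (?f n))" by (intro Liminf_bounded) simp
  moreover have "liminf (\<lambda>n. ereal (?f n)) \<le> limsup (\<lambda>n. ereal (?f n))"
    by (rule Liminf_le_Limsup) simp
  ultimately have "liminf (\<lambda>n. ereal (?f n)) = 0" "limsup (\<lambda>n. ereal (?f n)) = 0"
    using h unfolding upper_density_def by auto
  then have "(\<lambda>n. ereal (?f n)) \<longlonglongrightarrow> 0"
    by (intro tendsto_iff_Liminf_eq_Limsup[THEN iffD2]) auto
  then have "(\<lambda>n. ereal (?f n)) \<longlonglongrightarrow> ereal 0" by (simp add: zero_ereal_def)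
  then show "thin A" unfolding thin_def by simp
qed

lemma sandwich0:
  fixes g h :: "nat \<Rightarrow> real"
  assumes "\<And>n. 0 \<le> g n" "\<And>n. g n \<le> h n" "h \<longlonglongrightarrow> 0"
  shows "g \<longlonglongrightarrow> 0"
  by (rule tendsto_sandwich[of "\<lambda>_. 0" g sequentially h 0]) (use assms in auto)

lemma thin_subset: assumes "thin B" "A \<subseteq> B" shows "thin A"
  unfolding thin_def
proof (rule sandwich0)
  show "(\<lambda>n. real (card (B \<inter> {..<n})) / real n) \<longlonglongrightarrow> 0" using assms(1) unfolding thin_def .
  show "0 \<le> real (card (A \<inter> {..<n})) / real n" for n by simp
  have "card (A \<inter> {..<n}) \<le> card (B \<inter> {..<n})" for n
    by (rule card_mono) (use assms(2) in auto)
  then show "real (card (A \<inter> {..<n})) / real n \<le> real (card (B \<inter> {..<n})) / real n" for n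
    by (auto intro!: divide_right_mono)
qed

lemma thin_Un: assumes a0: "thin A" and b0: "thin B" shows "thin (A \<union> B)"
  unfolding thin_def
proof (rule sandwich0)
  have a: "(\<lambda>n. real (card (A \<inter> {..<n})) / real n) \<longlonglongrightarrow> 0"
    using a0 unfolding thin_def .
  have b: "(\<lambda>n. real (card (B \<inter> {..<n})) / real n) \<longlonglongrightarrow> 0"
    using b0 unfolding thin_def .
  show "(\<lambda>n. real (card (A \<inter> {..<n})) / real n + real (card (B \<inter> {..<n})) / real n) \<longlonglongrightarrow> 0"
    using tendsto_add[OF a b] by simp
  show "0 \<le> real (card ((A \<union> B) \<inter> {..<n})) / real n" for n by simp
  have cb: "card ((A \<union> B) \<inter> {..<n}) \<le> card (A \<inter> {..<n}) + card (B \<inter> {..<n})" for n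
    by (metis Int_Un_distrib2 card_Un_le)
  have c: "real (card ((A \<union> B) \<inter> {..<n})) \<le> real (card (A \<inter> {..<n})) + real (card (B \<inter> {..<n}))" for n
    using cb[of n] by linarith
  have "real (card ((A \<union> B) \<inter> {..<n})) / real n \<le> real (card (A \<inter> {..<n})) / real n + real (card (B \<inter> {..<n})) / real n" for n
    by (simp add: add_divide_distrib[symmetric] divide_right_mono c)
  then show "real (card ((A \<union> B) \<inter> {..<n})) / real n \<le> real (card (A \<inter> {..<n})) / real n + real (card (B \<inter> {..<n})) / real n" for n
    by simp
qed

lemma thin_empty: "thin {}" unfolding thin_def by simp

lemma thin_finite_UN: "finite S \<Longrightarrow> (\<And>x. x \<in> S \<Longrightarrow> thin (f x)) \<Longrightarrow> thin (\<Union>x\<in>S. f x)"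
  by (induction S rule: finite_induct) (auto intro: thin_Un thin_empty)

lemma thin_singleton: "thin {a}"
  unfolding thin_def
proof (rule sandwich0)
  show "(\<lambda>n. 1 / real n) \<longlonglongrightarrow> 0" by (rule lim_inverse_n')
  show "0 \<le> real (card ({a} \<inter> {..<n})) / real n" for n by simp
  have "card ({a} \<inter> {..<n}) \<le> 1" for n by (simp add: card_le_Suc0_iff_eq)
  then show "real (card ({a} \<inter> {..<n})) / real n \<le> 1 / real n" for n
    by (auto intro!: divide_right_mono)
qed

definition Sq :: "nat set" where "Sq = range (\<lambda>k. k * k)"

lemma thin_Sq: "thin Sq"
  unfolding thin_def
proof (rule sandwich0)
  have "(\<lambda>n. sqrt (inverse (real n))) \<longlonglongrightarrow> sqrt 0"
    by (intro tendsto_real_sqrt lim_inverse_n)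
  then have "(\<lambda>n. inverse (sqrt (real n)) + inverse (real n)) \<longlonglongrightarrow> 0 + 0"
    by (intro tendsto_add lim_inverse_n) (simp add: real_sqrt_inverse)
  moreover have "(sqrt (real n) + 1) / real n = inverse (sqrt (real n)) + inverse (real n)" for n
    by (simp add: add_divide_distrib sqrt_divide_self_eq inverse_eq_divide)
  ultimately show "(\<lambda>n. (sqrt (real n) + 1) / real n) \<longlonglongrightarrow> 0" by simp
  show "0 \<le> real (card (Sq \<inter> {..<n})) / real n" for n by simp
  have "real (card (Sq \<inter> {..<n})) \<le> sqrt (real n) + 1" for n
  proof -
    have "Sq \<inter> {..<n} \<subseteq> (\<lambda>k. k * k) ` {..<nat \<lceil>sqrt (real n)\<rceil>}"
    proof
      fix x assume "x \<in> Sq \<inter> {..<n}"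
      then obtain k where x: "x = k * k" "k * k < n" unfolding Sq_def by auto
      have "real k * real k < real n" using x(2) by (metis of_nat_less_iff of_nat_mult)
      then have "sqrt (real k * real k) < sqrt (real n)"
        using real_sqrt_less_iff by blast
      then have "real k < sqrt (real n)" by simp
      then have "k < nat \<lceil>sqrt (real n)\<rceil>" by linarith
      then show "x \<in> (\<lambda>k. k * k) ` {..<nat \<lceil>sqrt (real n)\<rceil>}" using x by auto
    qed
    then have "card (Sq \<inter> {..<n}) \<le> card ((\<lambda>k. k * k) ` {..<nat \<lceil>sqrt (real n)\<rceil>})"
      by (intro card_mono) auto
    also have "\<dots> \<le> nat \<lceil>sqrt (real n)\<rceil>" using card_image_le[of "{..<nat \<lceil>sqrt (real n)\<rceil>}"] by simp
    finally have "card (Sq \<inter> {..<n}) \<le> nat \<lceil>sqrt (real n)\<rceil>" .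
    then have "real (card (Sq \<inter> {..<n})) \<le> real (nat \<lceil>sqrt (real n)\<rceil>)" by linarith
    moreover have "real (nat \<lceil>sqrt (real n)\<rceil>) = real_of_int \<lceil>sqrt (real n)\<rceil>" by simp
    moreover have "real_of_int \<lceil>sqrt (real n)\<rceil> \<le> sqrt (real n) + 1" by linarith
    ultimately show ?thesis by linarith
  qed
  then show "real (card (Sq \<inter> {..<n})) / real n \<le> (sqrt (real n) + 1) / real n" for n
    by (auto intro!: divide_right_mono)
qed

lemma not_thin_UNIV: "\<not> thin UNIV"
proof
  assume "thin UNIV"
  then have "(\<lambda>n. real (card ({..<n::nat})) / real n) \<longlonglongrightarrow> 0" unfolding thin_def by simp
  moreover have "(\<lambda>n. real (card ({..<n::nat})) / real n) \<longlonglongrightarrow> 1"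
  proof (rule tendsto_eventually)
    show "\<forall>\<^sub>F n in sequentially. real (card {..<n::nat}) / real n = 1"
      using eventually_ge_at_top[of "1::nat"] by eventually_elim simp
  qed
  ultimately show False using LIMSEQ_unique by fastforce
qed


lemma C_d0_iff: "F \<in> C_d0 \<longleftrightarrow> F \<in> all_ops \<and> (\<forall>A. thin A \<longrightarrow> thin (image_pow F A))"
  by (simp add: C_d0_def ud_thin)

lemma C_d0_range:
  assumes "F \<in> all_ops" "thin T" "\<And>xs. length xs = fst F \<Longrightarrow> snd F xs \<in> T"
  shows "F \<in> C_d0"
proof -
  have "image_pow F A \<subseteq> T" for A using assms(3) unfolding image_pow_def by auto
  then show ?thesis using assms(1,2) thin_subset unfolding C_d0_iff by blast
qed

lemma clone_C_d0: "is_clone C_d0"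
  unfolding is_clone_def
proof (intro conjI allI impI)
  show "C_d0 \<subseteq> all_ops" unfolding C_d0_def by auto
next
  fix k i :: nat assume ki: "1 \<le> k \<and> i < k"
  have op: "proj k i \<in> all_ops" using ki unfolding all_ops_def proj_def by auto
  have "image_pow (proj k i) A \<subseteq> A" for A
    using ki unfolding image_pow_def proj_def by (auto intro!: nth_mem[THEN subsetD[rotated]])
  then show "proj k i \<in> C_d0" using op thin_subset unfolding C_d0_iff by blast
next
  fix F :: op and Gs k
  assume h: "F \<in> C_d0 \<and> length Gs = fst F \<and> 1 \<le> k \<and> (\<forall>G\<in>set Gs. G \<in> C_d0 \<and> fst G = k)"
  have op: "compose F Gs k \<in> all_ops" using h unfolding all_ops_def compose_def by auto
  have "thin (image_pow (compose F Gs k) A)" if A: "thin A" for A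
  proof -
    let ?U = "\<Union>G\<in>set Gs. image_pow G A"
    have U: "thin ?U" using h A by (intro thin_finite_UN) (auto simp: C_d0_iff)
    have "image_pow (compose F Gs k) A \<subseteq> image_pow F ?U"
    proof
      fix v assume "v \<in> image_pow (compose F Gs k) A"
      then obtain xs where xs: "length xs = k" "set xs \<subseteq> A" "v = snd (compose F Gs k) xs"
        unfolding image_pow_def compose_def by auto
      have "v = snd F (map (\<lambda>G. snd G xs) Gs)" using xs unfolding compose_def by simp
      moreover have "set (map (\<lambda>G. snd G xs) Gs) \<subseteq> ?U"
        using xs h unfolding image_pow_def by auto
      moreover have "length (map (\<lambda>G. snd G xs) Gs) = fst F" using h by simp
      ultimately show "v \<in> image_pow F ?U" unfolding image_pow_def by blast
    qed
    moreover have "thin (image_pow F ?U)" using h U unfolding C_d0_iff by blast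
    ultimately show ?thesis using thin_subset by blast
  qed
  then show "compose F Gs k \<in> C_d0" using op unfolding C_d0_iff by blast
qed

lemma sqrt_sq_nat: "nat \<lfloor>sqrt (real (y * y))\<rfloor> = y"
proof -
  have "sqrt (real (y * y)) = real y" by (simp add: of_nat_mult)
  then show ?thesis by simp
qed

lemma C_d0_ne: "C_d0 \<noteq> all_ops"
proof
  define F0 :: op where "F0 = (1, \<lambda>xs. if length xs = 1 then nat \<lfloor>sqrt (real (hd xs))\<rfloor> else 0)"
  assume eq: "C_d0 = all_ops"
  have "F0 \<in> all_ops" unfolding F0_def all_ops_def by auto
  then have "F0 \<in> C_d0" using eq by simp
  then have "thin (image_pow F0 Sq)" using thin_Sq unfolding C_d0_iff by blast
  moreover have "image_pow F0 Sq = UNIV"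
  proof (intro set_eqI iffI)
    fix y :: nat
    have "[y*y] \<in> {xs. length xs = fst F0 \<and> set xs \<subseteq> Sq}" unfolding F0_def Sq_def by auto
    moreover have "snd F0 [y*y] = y" unfolding F0_def using sqrt_sq_nat by simp
    ultimately show "y \<in> image_pow F0 Sq" unfolding image_pow_def by (metis image_eqI)
  qed simp
  ultimately show False using not_thin_UNIV by simp
qed

lemma count_mod:
  assumes "0 < c" "S \<subseteq> {..<c}"
  shows "card {y. y < t \<and> y mod c \<in> S} \<le> card S * (t div c + 1)"
proof -
  have fin: "finite S" using assms(2) finite_subset by blast
  have "{y. y < t \<and> y mod c \<in> S} \<subseteq> (\<lambda>(r,q). q*c + r) ` (S \<times> {..t div c})"
  proof
    fix y assume y: "y \<in> {y. y < t \<and> y mod c \<in> S}"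
    have "y = (y div c) * c + y mod c" by simp
    moreover have "y div c \<le> t div c" using y by (simp add: div_le_mono)
    ultimately show "y \<in> (\<lambda>(r,q). q*c + r) ` (S \<times> {..t div c})" using y
      by (auto intro!: image_eqI[where x="(y mod c, y div c)"])
  qed
  then have "card {y. y < t \<and> y mod c \<in> S} \<le> card ((\<lambda>(r,q). q*c + r) ` (S \<times> {..t div c}))"
    using fin by (intro card_mono) auto
  also have "\<dots> \<le> card (S \<times> {..t div c})" by (rule card_image_le) (use fin in auto)
  also have "\<dots> = card S * (t div c + 1)" by (simp add: card_cartesian_product)
  finally show ?thesis .
qed

fun nseq :: "(nat \<Rightarrow> bool) \<Rightarrow> nat \<Rightarrow> nat" where
  "nseq P 0 = (SOME n. P n)"
| "nseq P (Suc i) = (SOME n. P n \<and> (i+2) * nseq P i \<le> n)"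

lemma nseq_props:
  assumes "\<forall>N. \<exists>n\<ge>N. P n"
  shows "P (nseq P i) \<and> (i+2) * nseq P i \<le> nseq P (Suc i)"
proof -
  have ex: "\<exists>n. P n \<and> N \<le> n" for N using assms by blast
  have s: "P (nseq P (Suc j)) \<and> (j+2) * nseq P j \<le> nseq P (Suc j)" for j
    using someI_ex[OF ex[of "(j+2) * nseq P j"]] by simp
  have "P (nseq P i)"
  proof (cases i)
    case 0 then show ?thesis using someI_ex[OF ex[of 0]] by simp
  next
    case (Suc j) then show ?thesis using s by blast
  qed
  then show ?thesis using s by blast
qed

lemma not_thin_dense:
  assumes "\<not> thin B"
  shows "\<exists>\<delta>>0. \<forall>N. \<exists>n\<ge>N. 1 \<le> n \<and> \<delta> * real n \<le> real (card (B \<inter> {..<n}))"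
proof (rule ccontr)
  assume "\<not> ?thesis"
  then have H: "\<forall>\<delta>>0. \<exists>N. \<forall>n\<ge>N. 1 \<le> n \<longrightarrow> real (card (B \<inter> {..<n})) < \<delta> * real n"
    by (meson not_le)
  have "thin B" unfolding thin_def
  proof (rule LIMSEQ_I)
    fix r :: real assume r: "0 < r"
    obtain N where N: "\<forall>n\<ge>N. 1 \<le> n \<longrightarrow> real (card (B \<inter> {..<n})) < r * real n"
      using H r by blast
    have "norm (real (card (B \<inter> {..<n})) / real n - 0) < r" if "n \<ge> max N 1" for n
    proof -
      have n1: "real n > 0" using that by simp
      have "real (card (B \<inter> {..<n})) < r * real n" using N that by auto
      then have "real (card (B \<inter> {..<n})) / real n < r" using n1 by (simp add: divide_less_eq)
      then show ?thesis by simp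
    qed
    then show "\<exists>no. \<forall>n\<ge>no. norm (real (card (B \<inter> {..<n})) / real n - 0) < r" by blast
  qed
  then show False using assms by simp
qed

lemma ratio_bound:
  fixes N0 N1 T C0 C1 A0 A1 d X :: real and j :: nat
  assumes N0: "1 \<le> N0" and T: "N1 \<le> T" and g: "(real j + 2) * N0 \<le> N1" and d: "d > 0"
    and C0: "d * N0 \<le> C0" and C1: "d * N1 \<le> C1" and A: "0 \<le> A0" "0 \<le> A1"
    and X: "X \<le> N0 + A0 * (N1 / C0 + 1) + A1 * (T / C1 + 1)"
  shows "X / T \<le> 1 / real (Suc (Suc j)) + (1/d + 1) * (A0 / N0 + A1 / N1)"
proof -
  have N1: "N0 \<le> N1" using g N0 by (simp add: algebra_simps) (smt (verit) of_nat_0_le_iff mult_nonneg_nonneg)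
  have Tp: "0 < T" "0 < N1" using N0 N1 T by linarith+
  have C0p: "0 < C0" using C0 d N0 by (smt (verit) mult_pos_pos)
  have C1p: "0 < C1" using C1 d Tp by (smt (verit) mult_pos_pos)
  have "X / T \<le> (N0 + A0 * (N1 / C0 + 1) + A1 * (T / C1 + 1)) / T"
    using X Tp by (simp add: divide_right_mono)
  also have "\<dots> = N0 / T + (A0 / C0) * (N1 / T) + A0 / T + A1 / C1 + A1 / T"
    using Tp C0p C1p by (simp add: field_simps)
  also have "\<dots> \<le> 1 / real (Suc (Suc j)) + (1/d) * (A0 / N0) + A0 / N0 + (1/d) * (A1 / N1) + A1 / N1"
  proof (intro add_mono)
    have "N0 / T \<le> N0 / N1" using N0 T Tp by (intro divide_left_mono) auto
    also have "N0 / N1 \<le> 1 / real (Suc (Suc j))" using g Tp N0 by (simp add: field_simps)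
    finally show "N0 / T \<le> 1 / real (Suc (Suc j))" .
    have "A0 / C0 \<le> A0 / (d * N0)" using C0 A d N0 C0p by (intro divide_left_mono) auto
    also have "\<dots> = (1/d) * (A0 / N0)" by simp
    finally have q: "A0 / C0 \<le> (1/d) * (A0 / N0)" .
    have "(A0 / C0) * (N1 / T) \<le> (A0 / C0) * 1" using T Tp A C0p by (intro mult_left_mono) auto
    then show "(A0 / C0) * (N1 / T) \<le> (1/d) * (A0 / N0)" using q by simp
    show "A0 / T \<le> A0 / N0" using A N0 N1 T by (intro divide_left_mono) auto
    have "A1 / C1 \<le> A1 / (d * N1)" using C1 A d Tp C1p by (intro divide_left_mono) auto
    then show "A1 / C1 \<le> (1/d) * (A1 / N1)" by simp
    show "A1 / T \<le> A1 / N1" using A T Tp by (intro divide_left_mono) auto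
  qed
  also have "\<dots> = 1 / real (Suc (Suc j)) + (1/d + 1) * (A0 / N0 + A1 / N1)"
    by (simp add: algebra_simps)
  finally show ?thesis .
qed

lemma sigma_estimate:
  fixes n c a :: "nat \<Rightarrow> nat" and \<delta> :: real and e :: "nat \<Rightarrow> nat \<Rightarrow> nat"
  assumes npos: "\<And>i. 1 \<le> n i"
    and dens: "\<And>i. \<delta> * real (n i) \<le> real (c i)"
    and grow: "\<And>i. (i+2) * n i \<le> n (Suc i)"
    and dpos: "\<delta> > 0"
    and ebij: "\<And>i. bij_betw (e i) {0..<c i} (B \<inter> {..<n i})"
    and blk_def: "blk = (\<lambda>y. LEAST i. y < n (Suc i))"
    and \<sigma>_def: "\<sigma> = (\<lambda>y. if y < n 0 then b0 else e (blk y) (y mod c (blk y)))"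
    and thinA: "thin A"
  shows "thin (\<sigma> -` A)"
proof -
  have nsuc: "n i < n (Suc i)" for i using grow[of i] npos[of i] by (simp add: algebra_simps)
  have smono: "strict_mono n" using nsuc by (simp add: strict_mono_Suc_iff)
  have nle: "i \<le> j \<Longrightarrow> n i \<le> n j" for i j using smono by (simp add: strict_mono_less_eq)
  have b1: "y < n (Suc (blk y))" for y
  proof -
    have "y < n (Suc y)" using seq_suble[OF smono, of y] nsuc[of y] by simp
    then show ?thesis unfolding blk_def by (rule LeastI)
  qed
  have b3: "i \<le> blk y" if "n i \<le> y" for i y
  proof (rule ccontr)
    assume "\<not> i \<le> blk y"
    then have "n (Suc (blk y)) \<le> n i" by (intro nle) simp
    then show False using b1[of y] that by simp
  qed
  have b4: "blk y \<le> i" if "y < n (Suc i)" for i y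
    unfolding blk_def by (rule Least_le) (rule that)
  have b2: "n (Suc j) \<le> t" if "blk t = Suc j" for t j
  proof -
    have "\<not> t < n (Suc j)" unfolding blk_def
      by (rule not_less_Least) (use that in \<open>simp add: blk_def\<close>)
    then show ?thesis by simp
  qed
  have cpos: "0 < c i" for i
  proof -
    have "0 < \<delta> * real (n i)" using dpos npos[of i] by simp
    then show ?thesis using dens[of i] by linarith
  qed
  define a where "a j = card (A \<inter> {..<n j})" for j
  define S where "S j = {r. r < c j \<and> e j r \<in> A}" for j
  have cardS: "card (S j) \<le> a j" for j
  proof -
    have sub: "S j \<subseteq> {0..<c j}" unfolding S_def by auto
    have inj: "inj_on (e j) (S j)"
      using bij_betw_imp_inj_on[OF ebij[of j]] sub inj_on_subset by blast
    have "e j ` S j \<subseteq> A \<inter> {..<n j}"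
      using bij_betwE[OF ebij[of j]] sub unfolding S_def by auto
    then have "card (e j ` S j) \<le> a j" unfolding a_def by (intro card_mono) auto
    then show ?thesis using card_image[OF inj] by simp
  qed
  have Ssub: "S j \<subseteq> {..<c j}" for j unfolding S_def by auto
  have sub: "\<sigma> -` A \<inter> {..<t} \<subseteq> {..<n j} \<union> {y. y < n (Suc j) \<and> y mod c j \<in> S j}
      \<union> {y. y < t \<and> y mod c (Suc j) \<in> S (Suc j)}" if bt: "blk t = Suc j" for t j
  proof
    fix y assume y: "y \<in> \<sigma> -` A \<inter> {..<t}"
    show "y \<in> {..<n j} \<union> {y. y < n (Suc j) \<and> y mod c j \<in> S j}
      \<union> {y. y < t \<and> y mod c (Suc j) \<in> S (Suc j)}"
    proof (cases "y < n j")
      case True then show ?thesis by simp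
    next
      case False
      then have y0: "\<not> y < n 0" using nle[of 0 j] by simp
      have "j \<le> blk y" using b3[of j y] False by simp
      moreover have "blk y \<le> Suc j"
        using b4[of y "Suc j"] b1[of t] y bt by simp
      moreover have yA: "e (blk y) (y mod c (blk y)) \<in> A" using y y0 unfolding \<sigma>_def by simp
      moreover have "y mod c i < c i" for i using cpos[of i] by simp
      ultimately consider "blk y = j" | "blk y = Suc j" by linarith
      then show ?thesis
      proof cases
        case 1
        then have "y < n (Suc j)" using b1[of y] by simp
        then show ?thesis using 1 yA \<open>y mod c j < c j\<close> unfolding S_def by simp
      next
        case 2
        then show ?thesis using yA y \<open>y mod c (Suc j) < c (Suc j)\<close> unfolding S_def by simp
      qed
    qed
  qed
  have cnt: "real (card (\<sigma> -` A \<inter> {..<t})) \<le> real (n j) + real (a j) * (real (n (Suc j)) / real (c j) + 1)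
      + real (a (Suc j)) * (real t / real (c (Suc j)) + 1)" if bt: "blk t = Suc j" for t j
  proof -
    let ?X = "{..<n j}"
    let ?Y = "{y. y < n (Suc j) \<and> y mod c j \<in> S j}"
    let ?Z = "{y. y < t \<and> y mod c (Suc j) \<in> S (Suc j)}"
    have finY: "finite ?Y" by (rule finite_subset[of _ "{..<n (Suc j)}"]) auto
    have finZ: "finite ?Z" by (rule finite_subset[of _ "{..<t}"]) auto
    have "card (\<sigma> -` A \<inter> {..<t}) \<le> card (?X \<union> ?Y \<union> ?Z)"
      using finY finZ sub[OF bt] by (intro card_mono) auto
    also have "\<dots> \<le> card (?X \<union> ?Y) + card ?Z" by (rule card_Un_le)
    also have "\<dots> \<le> card ?X + card ?Y + card ?Z" using card_Un_le[of ?X ?Y] by simp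
    finally have c1: "real (card (\<sigma> -` A \<inter> {..<t})) \<le> real (n j) + real (card ?Y) + real (card ?Z)"
      by simp
    have "card ?Y \<le> card (S j) * (n (Suc j) div c j + 1)" by (rule count_mod[OF cpos Ssub])
    then have "real (card ?Y) \<le> real (card (S j)) * (real (n (Suc j) div c j) + 1)"
      by (metis of_nat_add of_nat_le_iff of_nat_mult of_nat_1)
    also have "\<dots> \<le> real (a j) * (real (n (Suc j)) / real (c j) + 1)"
      using cardS[of j] of_nat_div_le_of_nat[of "n (Suc j)" "c j"] by (intro mult_mono) auto
    finally have c2: "real (card ?Y) \<le> real (a j) * (real (n (Suc j)) / real (c j) + 1)" .
    have "card ?Z \<le> card (S (Suc j)) * (t div c (Suc j) + 1)" by (rule count_mod[OF cpos Ssub])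
    then have "real (card ?Z) \<le> real (card (S (Suc j))) * (real (t div c (Suc j)) + 1)"
      by (metis of_nat_add of_nat_le_iff of_nat_mult of_nat_1)
    also have "\<dots> \<le> real (a (Suc j)) * (real t / real (c (Suc j)) + 1)"
      using cardS[of "Suc j"] of_nat_div_le_of_nat[of t "c (Suc j)"] by (intro mult_mono) auto
    finally have c3: "real (card ?Z) \<le> real (a (Suc j)) * (real t / real (c (Suc j)) + 1)" .
    show ?thesis using c1 c2 c3 by linarith
  qed
  define g where "g j = real (a j) / real (n j)" for j
  define R where "R j = 1 / real (Suc (Suc j)) + (1/\<delta> + 1) * (g j + g (Suc j))" for j
  have ratio: "real (card (\<sigma> -` A \<inter> {..<t})) / real t \<le> R j" if bt: "blk t = Suc j" for t j
    unfolding R_def g_def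
  proof (rule ratio_bound[OF _ _ _ dpos _ _ _ _ cnt[OF bt]])
    show "1 \<le> real (n j)" using npos[of j] by simp
    show "real (n (Suc j)) \<le> real t" using b2[OF bt] by simp
    show "(real j + 2) * real (n j) \<le> real (n (Suc j))"
      using grow[of j] by (metis of_nat_add of_nat_le_iff of_nat_mult of_nat_numeral)
    show "\<delta> * real (n j) \<le> real (c j)" by (rule dens)
    show "\<delta> * real (n (Suc j)) \<le> real (c (Suc j))" by (rule dens)
  qed auto
  have gl: "g \<longlonglongrightarrow> 0"
  proof -
    have "((\<lambda>m. real (card (A \<inter> {..<m})) / real m) \<circ> n) \<longlonglongrightarrow> 0"
      using thinA smono unfolding thin_def by (rule LIMSEQ_subseq_LIMSEQ)
    then show ?thesis unfolding g_def a_def comp_def .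
  qed
  have Rl: "R \<longlonglongrightarrow> 0"
  proof -
    have l1: "(\<lambda>j. 1 / real (Suc (Suc j))) \<longlonglongrightarrow> 0"
      by (intro LIMSEQ_Suc lim_inverse_n')
    have "(\<lambda>j. (1/\<delta> + 1) * (g j + g (Suc j))) \<longlonglongrightarrow> (1/\<delta> + 1) * (0 + 0)"
      by (intro tendsto_mult tendsto_const tendsto_add gl LIMSEQ_Suc)
    from tendsto_add[OF l1 this] show ?thesis unfolding R_def by simp
  qed
  have bl: "filterlim (\<lambda>t. blk t - 1) sequentially sequentially"
    unfolding filterlim_at_top
  proof
    fix Z
    show "\<forall>\<^sub>F t in sequentially. Z \<le> blk t - 1"
      using eventually_ge_at_top[of "n (Suc Z)"]
    proof eventually_elim
      case (elim t) then show ?case using b3[of "Suc Z" t] by simp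
    qed
  qed
  have Rb: "(\<lambda>t. R (blk t - 1)) \<longlonglongrightarrow> 0" by (rule filterlim_compose[OF Rl bl])
  show ?thesis unfolding thin_def
  proof (rule tendsto_sandwich[OF _ _ tendsto_const Rb])
    show "\<forall>\<^sub>F t in sequentially. 0 \<le> real (card (\<sigma> -` A \<inter> {..<t})) / real t" by simp
    show "\<forall>\<^sub>F t in sequentially. real (card (\<sigma> -` A \<inter> {..<t})) / real t \<le> R (blk t - 1)"
      using eventually_ge_at_top[of "n 1"]
    proof eventually_elim
      case (elim t)
      then have "1 \<le> blk t" using b3[of 1 t] by simp
      then have "blk t = Suc (blk t - 1)" by simp
      then show ?case by (rule ratio)
    qed
  qed
qed

lemma sigma_exists:
  assumes nt: "\<not> thin B"
  shows "\<exists>\<sigma>. (\<forall>y. \<sigma> y \<in> B) \<and> (\<forall>A. thin A \<longrightarrow> thin (\<sigma> -` A))"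
proof -
  obtain \<delta> where dpos: "\<delta> > 0"
    and D: "\<forall>N. \<exists>n\<ge>N. 1 \<le> n \<and> \<delta> * real n \<le> real (card (B \<inter> {..<n}))"
    using not_thin_dense[OF nt] by blast
  define P where "P n \<longleftrightarrow> 1 \<le> n \<and> \<delta> * real n \<le> real (card (B \<inter> {..<n}))" for n
  have PN: "\<forall>N. \<exists>n\<ge>N. P n" using D unfolding P_def by blast
  define n where "n = nseq P"
  have np: "P (n i)" "(i+2) * n i \<le> n (Suc i)" for i
    using nseq_props[OF PN, of i] unfolding n_def by auto
  define c where "c i = card (B \<inter> {..<n i})" for i
  have "\<forall>i. \<exists>f. bij_betw f {0..<c i} (B \<inter> {..<n i})"
    unfolding c_def by (intro allI ex_bij_betw_nat_finite) simp
  then obtain e where ebij: "\<And>i. bij_betw (e i) {0..<c i} (B \<inter> {..<n i})" by metis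
  have "B \<noteq> {}" using nt thin_empty by auto
  then obtain b0 where b0: "b0 \<in> B" by blast
  define blk where "blk = (\<lambda>y. LEAST i. y < n (Suc i))"
  define \<sigma> where "\<sigma> = (\<lambda>y. if y < n 0 then b0 else e (blk y) (y mod c (blk y)))"
  have npos: "1 \<le> n i" and dens: "\<delta> * real (n i) \<le> real (c i)" for i
    using np(1)[of i] unfolding P_def c_def by auto
  have cpos: "0 < c i" for i
  proof -
    have "0 < \<delta> * real (n i)" using dpos npos[of i] by simp
    then show ?thesis using dens[of i] by linarith
  qed
  have "\<sigma> y \<in> B" for y
  proof (cases "y < n 0")
    case True then show ?thesis using b0 unfolding \<sigma>_def by simp
  next
    case False
    have "y mod c (blk y) \<in> {0..<c (blk y)}" using cpos[of "blk y"] by simp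
    then have "e (blk y) (y mod c (blk y)) \<in> B \<inter> {..<n (blk y)}"
      using bij_betwE[OF ebij[of "blk y"]] by blast
    then show ?thesis using False unfolding \<sigma>_def by simp
  qed
  moreover have "thin (\<sigma> -` A)" if "thin A" for A
    by (rule sigma_estimate[OF npos dens np(2) dpos ebij blk_def \<sigma>_def that])
  ultimately show ?thesis by blast
qed

theorem mainTheorem7:
  shows "precomplete C_d0"
  unfolding precomplete_def
proof (intro conjI allI impI)
  show "is_clone C_d0" by (rule clone_C_d0)
  show "C_d0 \<noteq> all_ops" by (rule C_d0_ne)
  fix D assume h: "is_clone D \<and> C_d0 \<subset> D"
  have Dops: "D \<subseteq> all_ops" using h unfolding is_clone_def by blast
  have comp: "\<And>F Gs k. F \<in> D \<Longrightarrow> length Gs = fst F \<Longrightarrow> 1 \<le> k \<Longrightarrow> (\<forall>G\<in>set Gs. G \<in> D \<and> fst G = k)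
      \<Longrightarrow> compose F Gs k \<in> D"
    using h unfolding is_clone_def by blast
  have CD: "C_d0 \<subseteq> D" using h by blast
  obtain F where F: "F \<in> D" "F \<notin> C_d0" using h by blast
  have Fop: "F \<in> all_ops" using F Dops by blast
  then obtain A where A: "thin A" "\<not> thin (image_pow F A)" using F(2) unfolding C_d0_iff by blast
  define B where "B = image_pow F A"
  obtain \<sigma> where \<sigma>B: "\<And>y. \<sigma> y \<in> B" and \<sigma>t: "\<And>A'. thin A' \<Longrightarrow> thin (\<sigma> -` A')"
    using sigma_exists[of B] A(2) unfolding B_def by blast
  define m where "m = fst F"
  define tup where "tup b = (SOME xs. length xs = m \<and> set xs \<subseteq> A \<and> snd F xs = b)" for b
  have tup: "length (tup b) = m \<and> set (tup b) \<subseteq> A \<and> snd F (tup b) = b" if "b \<in> B" for b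
  proof -
    from that obtain xs where "length xs = m \<and> set xs \<subseteq> A \<and> snd F xs = b"
      unfolding B_def image_pow_def m_def by auto
    then show ?thesis unfolding tup_def by (rule someI)
  qed
  show "D = all_ops"
  proof
    show "D \<subseteq> all_ops" by (rule Dops)
    show "all_ops \<subseteq> D"
    proof
      fix H assume H: "H \<in> all_ops"
      obtain k h where Hkh: "H = (k, h)" by (cases H)
      have k1: "1 \<le> k" and h0: "\<And>xs. length xs \<noteq> k \<Longrightarrow> h xs = 0"
        using H Hkh unfolding all_ops_def by auto
      define v :: "nat \<Rightarrow> op" where "v i = (k, \<lambda>xs. if length xs = k then tup (\<sigma> (h xs)) ! i else 0)" for i
      have vC: "v i \<in> C_d0" if im: "i < m" for i
      proof (rule C_d0_range[where T = "A \<union> {0}"])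
        show "v i \<in> all_ops" unfolding v_def all_ops_def using k1 by auto
        show "thin (A \<union> {0})" using A(1) thin_singleton thin_Un by blast
        show "snd (v i) xs \<in> A \<union> {0}" if "length xs = fst (v i)" for xs
        proof -
          have "tup (\<sigma> (h xs)) ! i \<in> A" using tup[OF \<sigma>B[of "h xs"]] im nth_mem by blast
          then show ?thesis unfolding v_def by simp
        qed
      qed
      define G where "G = compose F (map v [0..<m]) k"
      have GD: "G \<in> D" unfolding G_def
        using F(1) k1 vC CD by (intro comp) (auto simp: m_def v_def)
      have Gk: "fst G = k" unfolding G_def compose_def by simp
      have Gv: "snd G xs = \<sigma> (h xs)" if "length xs = k" for xs
      proof -
        have "map (\<lambda>G. snd G xs) (map v [0..<m]) = map (\<lambda>i. tup (\<sigma> (h xs)) ! i) [0..<m]"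
          using that unfolding v_def by simp
        also have "\<dots> = tup (\<sigma> (h xs))" using tup[OF \<sigma>B[of "h xs"]] by (metis map_nth)
        finally show ?thesis unfolding G_def compose_def using that tup[OF \<sigma>B[of "h xs"]] by simp
      qed
      define Cd :: op where "Cd = (k, \<lambda>xs. if length xs = k then h xs * h xs else 0)"
      have CdC: "Cd \<in> C_d0"
      proof (rule C_d0_range[where T = Sq])
        show "Cd \<in> all_ops" unfolding Cd_def all_ops_def using k1 by auto
        show "thin Sq" by (rule thin_Sq)
        show "snd Cd xs \<in> Sq" if "length xs = fst Cd" for xs
          unfolding Cd_def Sq_def by auto
      qed
      define P :: op where "P = (2, \<lambda>xs. if length xs = 2 then
          (if xs!0 = nat \<lfloor>sqrt (real (xs!0))\<rfloor> * nat \<lfloor>sqrt (real (xs!0))\<rfloor> \<and> \<sigma> (nat \<lfloor>sqrt (real (xs!0))\<rfloor>) = xs!1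
           then nat \<lfloor>sqrt (real (xs!0))\<rfloor> else 0) else 0)"
      have PC: "P \<in> C_d0" unfolding C_d0_iff
      proof (intro conjI allI impI)
        show "P \<in> all_ops" unfolding P_def all_ops_def by auto
        fix A' assume A': "thin A'"
        have "image_pow P A' \<subseteq> {0} \<union> \<sigma> -` A'"
        proof
          fix u assume "u \<in> image_pow P A'"
          then obtain xs where xs: "length xs = 2" "set xs \<subseteq> A'" "u = snd P xs"
            unfolding image_pow_def P_def by auto
          have "xs ! 1 \<in> A'" using xs nth_mem[of 1 xs] by auto
          then show "u \<in> {0} \<union> \<sigma> -` A'" using xs unfolding P_def by auto
        qed
        moreover have "thin ({0} \<union> \<sigma> -` A')" using thin_Un thin_singleton \<sigma>t[OF A'] by blast
        ultimately show "thin (image_pow P A')" using thin_subset by blast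
      qed
      define Fin where "Fin = compose P [Cd, G] k"
      have "Fin \<in> D" unfolding Fin_def
        using PC CD GD Gk k1 CdC by (intro comp) (auto simp: P_def Cd_def)
      moreover have "Fin = H"
      proof -
        have "(\<lambda>xs. if length xs = k then snd P (map (\<lambda>G. snd G xs) [Cd, G]) else 0) = h"
        proof
          fix xs show "(if length xs = k then snd P (map (\<lambda>G. snd G xs) [Cd, G]) else 0) = h xs"
          proof (cases "length xs = k")
            case True
            then show ?thesis using Gv[OF True] unfolding P_def Cd_def by (simp add: sqrt_sq_nat)
          next
            case False then show ?thesis using h0 by simp
          qed
        qed
        then show ?thesis unfolding Fin_def compose_def Hkh by simp
      qed
      ultimately show "H \<in> D" by simp
    qed
  qed
qed

end
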